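(* There exist two upper semicomputable symmetric functions $E_1,E_2$ from pairs of binary strings to $\mathbb{N}\cup\{\infty\}$, each of which satisfies the triangle inequality and the condition that there is a constant $c$ with $\#\{y : E_i(x,y)<n\}\le c2^n$ for all integers $n$ and strings $x$, such that no non-negative function $E$ on pairs of binary strings that is bounded by both $E_1$ and $E_2$ satisfies both this counting condition (for some constant $c$) and the triangle inequality.
   Context: A function $E$ is upper semicomputable if the set of triples $(x,y,n)$ with $E(x,y)<n$ is computably enumerable. The triangle inequality means $E(x,z)\le E(x,y)+E(y,z)$ for all strings $x,y,z$. *)

theory Defs
  imports Complex_Main "HOL-Library.Extended_Real"
begin

datatype prim_fn = Zero | Succ | Proj nat | Comp prim_fn "prim_fn list" | Prec prim_fn prim_fn

fun pr_eval :: "prim_fn \<Rightarrow> nat list \<Rightarrow> nat" where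
  "pr_eval Zero xs = 0"
| "pr_eval Succ xs = (case xs of [] \<Rightarrow> 1 | x # _ \<Rightarrow> Suc x)"
| "pr_eval (Proj i) xs = (if i < length xs then xs ! i else 0)"
| "pr_eval (Comp f gs) xs = pr_eval f (map (\<lambda>g. pr_eval g xs) gs)"
| "pr_eval (Prec f g) xs = (case xs of
       [] \<Rightarrow> pr_eval f []
     | n # ys \<Rightarrow> rec_nat (pr_eval f ys) (\<lambda>k r. pr_eval g (k # r # ys)) n)"

type_synonym bstring = "bool list"

text \<open>Bijective base-2 numbering of binary strings (a bijection bool list -> nat).\<close>
fun str_code :: "bstring \<Rightarrow> nat" where
  "str_code [] = 0"
| "str_code (b # bs) = 2 * str_code bs + (if b then 2 else 1)"

text \<open>A relation on triples is computably enumerable iff it is the projection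
  of a primitive recursive relation (Kleene normal form).\<close>
definition upper_semicomputable :: "(bstring \<Rightarrow> bstring \<Rightarrow> enat) \<Rightarrow> bool" where
  "upper_semicomputable E \<longleftrightarrow>
     (\<exists>p. \<forall>x y (n::nat). E x y < enat n \<longleftrightarrow>
            (\<exists>t. pr_eval p [str_code x, str_code y, n, t] = 0))"

definition symmetric_fn :: "('a \<Rightarrow> 'a \<Rightarrow> 'b) \<Rightarrow> bool" where
  "symmetric_fn E \<longleftrightarrow> (\<forall>x y. E x y = E y x)"

definition triangle_ineq :: "('a \<Rightarrow> 'a \<Rightarrow> 'b::{plus,ord}) \<Rightarrow> bool" where
  "triangle_ineq E \<longleftrightarrow> (\<forall>x y z. E x z \<le> E x y + E y z)"

text \<open>Counting condition: some constant c with #{y. E(x,y) < n} <= c 2^n for all n, x.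
  (Only n >= 1 matters since E is non-negative; the set is required to be finite.)\<close>
definition count_cond :: "(bstring \<Rightarrow> bstring \<Rightarrow> ereal) \<Rightarrow> bool" where
  "count_cond E \<longleftrightarrow> (\<exists>c::real. \<forall>x (n::nat).
      finite {y. E x y < ereal (real n)} \<and> real (card {y. E x y < ereal (real n)}) \<le> c * 2 ^ n)"

end

theory Submission
  imports Defs
begin

definition pr_add :: prim_fn where "pr_add = Prec (Proj 0) (Comp Succ [Proj 1])"
definition pr_pred :: prim_fn where "pr_pred = Prec Zero (Proj 0)"
definition pr_monus :: prim_fn where
  "pr_monus = Comp (Prec (Proj 0) (Comp pr_pred [Proj 1])) [Proj 1, Proj 0]"

lemma pr_add_eval: "pr_eval pr_add [x, y] = x + y"
  unfolding pr_add_def by (induct x) auto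

lemma pr_pred_eval: "pr_eval pr_pred [x] = x - 1"
  unfolding pr_pred_def by (cases x) auto

lemma pr_monus_eval: "pr_eval pr_monus [x, y] = x - y"
proof -
  have "pr_eval (Prec (Proj 0) (Comp pr_pred [Proj 1])) [y, x] = x - y"
    by (induct y) (auto simp: pr_pred_eval)
  then show ?thesis unfolding pr_monus_def by simp
qed

definition padd :: "prim_fn \<Rightarrow> prim_fn \<Rightarrow> prim_fn" where
  "padd f g = Comp pr_add [f, g]"
definition pmon :: "prim_fn \<Rightarrow> prim_fn \<Rightarrow> prim_fn" where
  "pmon f g = Comp pr_monus [f, g]"

lemma padd_eval[simp]: "pr_eval (padd f g) xs = pr_eval f xs + pr_eval g xs"
  unfolding padd_def by (simp add: pr_add_eval)
lemma pmon_eval[simp]: "pr_eval (pmon f g) xs = pr_eval f xs - pr_eval g xs"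
  unfolding pmon_def by (simp add: pr_monus_eval)

definition Pcl :: "prim_fn \<Rightarrow> prim_fn \<Rightarrow> prim_fn" where
  "Pcl A B = (let T2 = padd (Proj 3) (Proj 3); T21 = Comp Succ [T2] in
     padd (padd (padd (pmon T2 A) (pmon A T21)) (padd (pmon T2 B) (pmon B T21)))
          (pmon (Comp Succ [Zero]) (Proj 2)))"

lemma Pcl_eval:
  "pr_eval (Pcl A B) [a, b, n, t] =
   (t + t - pr_eval A [a,b,n,t]) + (pr_eval A [a,b,n,t] - Suc (t + t))
   + ((t + t - pr_eval B [a,b,n,t]) + (pr_eval B [a,b,n,t] - Suc (t + t))) + (1 - n)"
  unfolding Pcl_def Let_def by simp

lemma str_code_inj: "inj str_code"
proof (rule injI)
  fix xs ys :: bstring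
  show "str_code xs = str_code ys \<Longrightarrow> xs = ys"
  proof (induct xs arbitrary: ys)
    case Nil then show ?case by (cases ys) (auto split: if_splits)
  next
    case (Cons a xs)
    obtain b l where ys: "ys = b # l" using Cons.prems by (cases ys) (auto split: if_splits)
    have e: "2 * str_code xs + (if a then 2 else 1) = 2 * str_code l + (if b then 2 else 1)"
      using Cons.prems ys by simp
    have ab: "a = b" using e by (cases a; cases b) presburger+
    then have "str_code xs = str_code l" using e by simp
    then show ?case using Cons.hyps ys ab by simp
  qed
qed

lemma str_code_surj: "\<exists>x. str_code x = n"
proof (induct n rule: less_induct)
  case (less n)
  show ?case
  proof (cases "n = 0")
    case True show ?thesis using True by (intro exI[of _ "[]"]) simp
  next
    case False
    show ?thesis
    proof (cases "even n")
      case True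
      define m where "m = n div 2 - 1"
      have m: "n = 2 * m + 2" using True False unfolding m_def by (elim evenE) simp
      obtain x where "str_code x = m" using less m by fastforce
      then show ?thesis using m by (intro exI[of _ "True # x"]) simp
    next
      case odd: False
      then obtain m where m: "n = 2 * m + 1" by (metis oddE)
      then obtain x where "str_code x = m" using less by fastforce
      then show ?thesis using m by (intro exI[of _ "False # x"]) simp
    qed
  qed
qed

definition cls :: "nat \<Rightarrow> bstring \<Rightarrow> nat" where
  "cls s x = (str_code x + s) div 2"

definition EE :: "nat \<Rightarrow> bstring \<Rightarrow> bstring \<Rightarrow> enat" where
  "EE s x y = (if cls s x = cls s y then 0 else \<infinity>)"

lemma EE_usc: "s \<le> 1 \<Longrightarrow> upper_semicomputable (EE s)"
proof -
  assume s: "s \<le> 1"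
  define A where "A = (if s = 0 then Proj 0 else Comp Succ [Proj 0])"
  define B where "B = (if s = 0 then Proj 1 else Comp Succ [Proj 1])"
  have A: "pr_eval A [a,b,n,t] = a + s" for a b n t using s by (auto simp: A_def)
  have B: "pr_eval B [a,b,n,t] = b + s" for a b n t using s by (auto simp: B_def)
  show ?thesis unfolding upper_semicomputable_def
  proof (intro exI[of _ "Pcl A B"] allI)
    fix x y and n :: nat
    show "EE s x y < enat n \<longleftrightarrow> (\<exists>t. pr_eval (Pcl A B) [str_code x, str_code y, n, t] = 0)"
      unfolding Pcl_eval A B EE_def cls_def
    proof
      assume h: "(if (str_code x + s) div 2 = (str_code y + s) div 2 then 0 else \<infinity>) < enat n"
      then have "(str_code x + s) div 2 = (str_code y + s) div 2" "n \<ge> 1"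
        by (auto split: if_splits simp: zero_enat_def)
      then show "\<exists>t. t + t - (str_code x + s) + (str_code x + s - Suc (t + t)) +
         (t + t - (str_code y + s) + (str_code y + s - Suc (t + t))) + (1 - n) = 0"
        by (intro exI[of _ "(str_code x + s) div 2"]) auto
    next
      assume "\<exists>t. t + t - (str_code x + s) + (str_code x + s - Suc (t + t)) +
         (t + t - (str_code y + s) + (str_code y + s - Suc (t + t))) + (1 - n) = 0"
      then obtain t where "t + t - (str_code x + s) + (str_code x + s - Suc (t + t)) +
         (t + t - (str_code y + s) + (str_code y + s - Suc (t + t))) + (1 - n) = 0" by (elim exE)
      then have h1: "t + t \<le> str_code x + s" "str_code x + s \<le> Suc (t + t)"
          "t + t \<le> str_code y + s" "str_code y + s \<le> Suc (t + t)" "n \<ge> 1"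
        by simp_all
      have "(str_code x + s) div 2 = t" using h1(1,2) by linarith
      moreover have "(str_code y + s) div 2 = t" using h1(3,4) by linarith
      ultimately have "(str_code x + s) div 2 = (str_code y + s) div 2" "n \<ge> 1" using h1(5) by simp_all
      then show "(if (str_code x + s) div 2 = (str_code y + s) div 2 then 0 else \<infinity>) < enat n"
        by (simp add: zero_enat_def)
    qed
  qed
qed

lemma EE_sym: "symmetric_fn (EE s)"
  unfolding symmetric_fn_def EE_def by auto

lemma EE_tri: "triangle_ineq (EE s)"
  unfolding triangle_ineq_def EE_def by auto

lemma EE_count: "count_cond (\<lambda>x y. ereal_of_enat (EE s x y))"
  unfolding count_cond_def
proof (intro exI[of _ 2] allI conjI)
  fix x and n :: nat
  let ?q = "cls s x"
  let ?S = "{y. ereal_of_enat (EE s x y) < ereal (real n)}"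
  have sub: "?S \<subseteq> str_code -` {2 * ?q - s, 2 * ?q + 1 - s}"
    by (auto simp: EE_def cls_def split: if_splits)
  have fin: "finite (str_code -` {2 * ?q - s, 2 * ?q + 1 - s})"
    by (rule finite_vimageI) (auto simp: str_code_inj)
  then show "finite ?S" using sub finite_subset by blast
  have "card ?S \<le> card {2 * ?q - s, 2 * ?q + 1 - s}"
    by (rule card_inj_on_le[of str_code]) (use sub str_code_inj in \<open>auto simp: inj_on_def inj_def\<close>)
  also have "\<dots> \<le> 2" by (simp add: card_insert_le_m1)
  finally have c2: "card ?S \<le> 2" .
  show "real (card ?S) \<le> 2 * 2 ^ n"
  proof (cases "n = 0")
    case True
    then have "?S = {}" using ereal_of_enat_nonneg by (auto simp: not_less zero_ereal_def[symmetric])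
    then show ?thesis by simp
  next
    case False
    have "(2::real) \<le> 2 * 2 ^ n" by simp
    moreover have "real (card ?S) \<le> 2" using c2 by simp
    ultimately show ?thesis by linarith
  qed
qed

lemma no_E: "\<not> (\<exists>E :: bstring \<Rightarrow> bstring \<Rightarrow> ereal.
          (\<forall>x y. 0 \<le> E x y) \<and>
          (\<forall>x y. E x y \<le> ereal_of_enat (EE 0 x y)) \<and>
          (\<forall>x y. E x y \<le> ereal_of_enat (EE 1 x y)) \<and>
          count_cond E \<and> triangle_ineq E)"
proof
  assume "\<exists>E :: bstring \<Rightarrow> bstring \<Rightarrow> ereal.
          (\<forall>x y. 0 \<le> E x y) \<and>
          (\<forall>x y. E x y \<le> ereal_of_enat (EE 0 x y)) \<and>
          (\<forall>x y. E x y \<le> ereal_of_enat (EE 1 x y)) \<and>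
          count_cond E \<and> triangle_ineq E"
  then obtain E :: "bstring \<Rightarrow> bstring \<Rightarrow> ereal" where
    b1: "\<And>x y. E x y \<le> ereal_of_enat (EE 0 x y)" and
    b2: "\<And>x y. E x y \<le> ereal_of_enat (EE 1 x y)" and
    cc: "count_cond E" and tr: "triangle_ineq E" by blast
  define st where "st k = (SOME x. str_code x = k)" for k
  have st: "str_code (st k) = k" for k
    unfolding st_def using str_code_surj by (rule someI_ex)
  have step: "E (st k) (st (Suc k)) \<le> 0" for k
  proof (cases "even k")
    case True
    then have "EE 0 (st k) (st (Suc k)) = 0"
      by (auto simp: EE_def cls_def st)
    then show ?thesis using b1[of "st k" "st (Suc k)"] by (simp add: zero_enat_def zero_ereal_def)
  next
    case False
    then have "EE 1 (st k) (st (Suc k)) = 0"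
      by (auto simp: EE_def cls_def st elim!: oddE)
    then show ?thesis using b2[of "st k" "st (Suc k)"] by (simp add: zero_enat_def zero_ereal_def)
  qed
  have all: "E (st 0) (st k) \<le> 0" for k
  proof (induct k)
    case 0
    have "EE 0 (st 0) (st 0) = 0" by (simp add: EE_def)
    then show ?case using b1[of "st 0" "st 0"] by (simp add: zero_enat_def zero_ereal_def)
  next
    case (Suc k)
    have "E (st 0) (st (Suc k)) \<le> E (st 0) (st k) + E (st k) (st (Suc k))"
      using tr unfolding triangle_ineq_def by blast
    also have "\<dots> \<le> 0 + 0" using Suc step by (intro add_mono) auto
    finally show ?case by simp
  qed
  have "finite {y. E (st 0) y < ereal (real 1)}"
    using cc unfolding count_cond_def by blast
  moreover have lt: "E (st 0) (st k) < ereal (real 1)" for k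
  proof -
    have "E (st 0) (st k) \<le> 0" by (rule all)
    also have "(0::ereal) < ereal (real 1)" by simp
    finally show ?thesis .
  qed
  moreover have "range st \<subseteq> {y. E (st 0) y < ereal (real 1)}"
    using lt by blast
  moreover have "inj st" by (metis injI st)
  ultimately have "finite (range st)" "inj st" using finite_subset by blast+
  then have "finite (UNIV :: nat set)" using finite_imageD by blast
  then show False by simp
qed

theorem proposition3:
  shows "\<exists>E1 E2 :: bstring \<Rightarrow> bstring \<Rightarrow> enat.
     upper_semicomputable E1 \<and> upper_semicomputable E2 \<and>
     symmetric_fn E1 \<and> symmetric_fn E2 \<and>
     triangle_ineq E1 \<and> triangle_ineq E2 \<and>
     count_cond (\<lambda>x y. ereal_of_enat (E1 x y)) \<and>
     count_cond (\<lambda>x y. ereal_of_enat (E2 x y)) \<and>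
     \<not> (\<exists>E :: bstring \<Rightarrow> bstring \<Rightarrow> ereal.
          (\<forall>x y. 0 \<le> E x y) \<and>
          (\<forall>x y. E x y \<le> ereal_of_enat (E1 x y)) \<and>
          (\<forall>x y. E x y \<le> ereal_of_enat (E2 x y)) \<and>
          count_cond E \<and> triangle_ineq E)"
proof -
  have a: "upper_semicomputable (EE 0)" "upper_semicomputable (EE 1)" by (rule EE_usc; simp)+
  show ?thesis
    apply (rule exI[of _ "EE 0"], rule exI[of _ "EE 1"])
    using a EE_sym EE_tri EE_count no_E by simp
qed

end
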